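(* Let $\lambda,\mu$ be integral partitions such that $\lambda$ stably embeds into $\mu$. Then $\|\lambda\|_p\le\|\mu\|_p$ for all $p\in[1,\infty]$ (equivalently, by Kuperberg's characterization, $\lambda$ bulk-embeds into $\mu$).
   Context: An integral partition is a finite nonincreasing sequence of positive integers. For $p\in[1,\infty)$, $\|\lambda\|_p=(\sum_i\lambda_i^p)^{1/p}$ and $\|\lambda\|_\infty=\max_i\lambda_i$. The product $\lambda\times\nu$ is the partition of all products $\lambda_i\nu_j$, reordered nonincreasingly. $\lambda=[\lambda_1,\ldots,\lambda_m]$ embeds into $\mu=[\mu_1,\ldots,\mu_n]$ if there is a map $\varphi:\{1,\ldots,m\}\to\{1,\ldots,n\}$ with $\sum_{i\in\varphi^{-1}(j)}\lambda_i\le\mu_j$ for all $j$. $\lambda$ stably embeds into $\mu$ if there is an integral partition $\nu$ such that $\lambda\times\nu$ embeds into $\mu\times\nu$. $\lambda$ bulk-embeds into $\mu$ if for every rational $\epsilon>0$ there exists $N$ with $\lambda^{\times N}$ embedding into $\mu^{\times N(1+\epsilon)}$; Kuperberg showed this holds iff $\|\lambda\|_p\le\|\mu\|_p$ for all $p\in[1,\infty]$. *)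

theory Defs
  imports Complex_Main
begin

definition is_partition :: "nat list \<Rightarrow> bool" where
  "is_partition l \<longleftrightarrow> sorted_wrt (\<lambda>a b. b \<le> a) l \<and> (\<forall>x\<in>set l. 0 < x)"

definition partition_product :: "nat list \<Rightarrow> nat list \<Rightarrow> nat list" where
  "partition_product l v = rev (sort [a * b. a \<leftarrow> l, b \<leftarrow> v])"

definition embeds :: "nat list \<Rightarrow> nat list \<Rightarrow> bool" where
  "embeds l m \<longleftrightarrow> (\<exists>\<phi> :: nat \<Rightarrow> nat.
      (\<forall>i < length l. \<phi> i < length m) \<and>
      (\<forall>j < length m. (\<Sum>i\<in>{i. i < length l \<and> \<phi> i = j}. l ! i) \<le> m ! j))"

definition stably_embeds :: "nat list \<Rightarrow> nat list \<Rightarrow> bool" where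
  "stably_embeds l m \<longleftrightarrow> (\<exists>v. is_partition v \<and> v \<noteq> [] \<and>
      embeds (partition_product l v) (partition_product m v))"

definition pnorm :: "real \<Rightarrow> nat list \<Rightarrow> real" where
  "pnorm p l = (\<Sum>x\<leftarrow>l. real x powr p) powr (1 / p)"

definition infnorm :: "nat list \<Rightarrow> real" where
  "infnorm l = real (Max (insert 0 (set l)))"

end

theory Submission
  imports Defs "HOL-Library.Multiset"
begin

lemma superadd_sum:
  fixes f :: "nat \<Rightarrow> real"
  assumes f0: "f 0 \<ge> 0" and sa: "\<And>a b. f a + f b \<le> f (a + b)" and "finite S"
  shows "(\<Sum>i\<in>S. f (g i)) \<le> f (\<Sum>i\<in>S. g i)"
  using assms(3)
proof (induction S rule: finite_induct)
  case empty then show ?case using f0 by simp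
next
  case (insert x F)
  have "(\<Sum>i\<in>insert x F. f (g i)) = f (g x) + (\<Sum>i\<in>F. f (g i))" using insert by simp
  also have "\<dots> \<le> f (g x) + f (\<Sum>i\<in>F. g i)" using insert by simp
  also have "\<dots> \<le> f (g x + (\<Sum>i\<in>F. g i))" by (rule sa)
  also have "\<dots> = f (\<Sum>i\<in>insert x F. g i)" using insert by simp
  finally show ?case .
qed

lemma embeds_sum:
  fixes f :: "nat \<Rightarrow> real"
  assumes f0: "f 0 \<ge> 0" and sa: "\<And>a b. f a + f b \<le> f (a + b)"
    and mono: "\<And>a b. a \<le> b \<Longrightarrow> f a \<le> f b"
    and e: "embeds l m"
  shows "(\<Sum>x\<leftarrow>l. f x) \<le> (\<Sum>x\<leftarrow>m. f x)"
proof -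
  obtain \<phi> where p1: "\<forall>i < length l. \<phi> i < length m"
    and p2: "\<forall>j < length m. (\<Sum>i\<in>{i. i < length l \<and> \<phi> i = j}. l ! i) \<le> m ! j"
    using e unfolding embeds_def by blast
  have "(\<Sum>x\<leftarrow>l. f x) = (\<Sum>i\<in>{..<length l}. f (l ! i))"
    by (simp add: sum_list_sum_nth atLeast0LessThan)
  also have "\<dots> = (\<Sum>j\<in>{..<length m}. \<Sum>i\<in>{i. i \<in> {..<length l} \<and> \<phi> i = j}. f (l ! i))"
    by (rule sum.group[symmetric]) (use p1 in auto)
  also have "\<dots> \<le> (\<Sum>j\<in>{..<length m}. f (m ! j))"
  proof (rule sum_mono)
    fix j assume j: "j \<in> {..<length m}"
    have "(\<Sum>i\<in>{i. i \<in> {..<length l} \<and> \<phi> i = j}. f (l ! i))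
        \<le> f (\<Sum>i\<in>{i. i \<in> {..<length l} \<and> \<phi> i = j}. l ! i)"
      by (rule superadd_sum[OF f0 sa]) auto
    also have "\<dots> \<le> f (m ! j)" using p2 j by (intro mono) auto
    finally show "(\<Sum>i\<in>{i. i \<in> {..<length l} \<and> \<phi> i = j}. f (l ! i)) \<le> f (m ! j)" .
  qed
  also have "\<dots> = (\<Sum>x\<leftarrow>m. f x)"
    by (simp add: sum_list_sum_nth atLeast0LessThan)
  finally show ?thesis .
qed

lemma embeds_elem:
  assumes e: "embeds l m" and x: "x \<in> set l"
  shows "\<exists>y\<in>set m. x \<le> y"
proof -
  obtain \<phi> where p1: "\<forall>i < length l. \<phi> i < length m"
    and p2: "\<forall>j < length m. (\<Sum>i\<in>{i. i < length l \<and> \<phi> i = j}. l ! i) \<le> m ! j"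
    using e unfolding embeds_def by blast
  obtain i where i: "i < length l" "l ! i = x" using x by (auto simp: in_set_conv_nth)
  let ?j = "\<phi> i"
  have j: "?j < length m" using p1 i by auto
  have "x \<le> (\<Sum>k\<in>{k. k < length l \<and> \<phi> k = ?j}. l ! k)"
  proof -
    have "l ! i \<le> (\<Sum>k\<in>{k. k < length l \<and> \<phi> k = ?j}. l ! k)"
      by (rule member_le_sum) (use i in auto)
    then show ?thesis using i by simp
  qed
  also have "\<dots> \<le> m ! ?j" using p2 j by auto
  finally have "x \<le> m ! ?j" .
  moreover have "m ! ?j \<in> set m" using j by simp
  ultimately show ?thesis by blast
qed

lemma rev_sort_sum: "(\<Sum>x\<leftarrow>rev (sort xs). (f::nat\<Rightarrow>real) x) = (\<Sum>x\<leftarrow>xs. f x)"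
  by (metis mset_map mset_rev mset_sort sum_mset_sum_list)

lemma pp_sum:
  fixes f :: "nat \<Rightarrow> real"
  shows "(\<Sum>x\<leftarrow>partition_product l v. f x) = (\<Sum>a\<leftarrow>l. \<Sum>b\<leftarrow>v. f (a * b))"
proof -
  have "(\<Sum>x\<leftarrow>partition_product l v. f x) = (\<Sum>x\<leftarrow>[a * b. a \<leftarrow> l, b \<leftarrow> v]. f x)"
    unfolding partition_product_def by (rule rev_sort_sum)
  also have "\<dots> = (\<Sum>a\<leftarrow>l. \<Sum>b\<leftarrow>v. f (a * b))"
    by (induction l) (simp_all add: comp_def)
  finally show ?thesis .
qed

lemma set_pp: "set (partition_product l v) = {a * b | a b. a \<in> set l \<and> b \<in> set v}"
  unfolding partition_product_def by auto

lemma powr_superadd: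
  fixes p :: real assumes p: "1 \<le> p"
  shows "real a powr p + real b powr p \<le> real (a + b) powr p"
proof -
  have A: "real x powr p \<le> real x * real (a + b) powr (p - 1)" if "x \<le> a + b" for x
  proof (cases "x = 0")
    case True then show ?thesis by simp
  next
    case False
    have "real x powr p = real x * real x powr (p - 1)"
      using False by (simp add: powr_diff)
    also have "\<dots> \<le> real x * real (a + b) powr (p - 1)"
      using that p by (intro mult_left_mono powr_mono2) auto
    finally show ?thesis .
  qed
  have "real a powr p + real b powr p \<le> real a * real (a + b) powr (p - 1) + real b * real (a + b) powr (p - 1)"
    using A[of a] A[of b] by simp
  also have "\<dots> = real (a + b) * real (a + b) powr (p - 1)" by (simp add: algebra_simps)
  also have "\<dots> = real (a + b) powr p"
    by (cases "a + b = 0") (simp_all add: powr_diff)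
  finally show ?thesis .
qed

theorem mainTheorem4:
  fixes lam mu :: "nat list"
  assumes "is_partition lam" and "is_partition mu"
    and "stably_embeds lam mu"
  shows "(\<forall>p::real. 1 \<le> p \<longrightarrow> pnorm p lam \<le> pnorm p mu) \<and> infnorm lam \<le> infnorm mu"
proof -
  obtain v where vp: "is_partition v" and vne: "v \<noteq> []"
    and e: "embeds (partition_product lam v) (partition_product mu v)"
    using assms(3) unfolding stably_embeds_def by blast
  have vpos: "\<forall>x\<in>set v. 0 < x" using vp unfolding is_partition_def by auto
  have P: "pnorm p lam \<le> pnorm p mu" if p: "1 \<le> p" for p :: real
  proof -
    let ?f = "\<lambda>x::nat. real x powr p"
    have "(\<Sum>x\<leftarrow>partition_product lam v. ?f x) \<le> (\<Sum>x\<leftarrow>partition_product mu v. ?f x)"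
      by (rule embeds_sum[OF _ _ _ e]) (use p powr_superadd[OF p] in \<open>auto intro: powr_mono2\<close>)
    hence "(\<Sum>a\<leftarrow>lam. \<Sum>b\<leftarrow>v. ?f (a * b)) \<le> (\<Sum>a\<leftarrow>mu. \<Sum>b\<leftarrow>v. ?f (a * b))"
      by (simp only: pp_sum)
    hence "(\<Sum>a\<leftarrow>lam. ?f a) * (\<Sum>b\<leftarrow>v. ?f b) \<le> (\<Sum>a\<leftarrow>mu. ?f a) * (\<Sum>b\<leftarrow>v. ?f b)"
      by (simp add: powr_mult sum_list_const_mult sum_list_mult_const)
    moreover have "(\<Sum>b\<leftarrow>v. ?f b) > 0"
    proof -
      obtain b vs where "v = b # vs" using vne by (cases v) auto
      moreover have "0 \<le> (\<Sum>b\<leftarrow>vs. ?f b)" by (intro sum_list_nonneg) auto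
      moreover have "b > 0" using vpos \<open>v = b # vs\<close> by auto
      ultimately show ?thesis by (simp add: add_pos_nonneg)
    qed
    ultimately have le: "(\<Sum>a\<leftarrow>lam. ?f a) \<le> (\<Sum>a\<leftarrow>mu. ?f a)" by simp
    have "0 \<le> (\<Sum>a\<leftarrow>lam. ?f a)" by (intro sum_list_nonneg) auto
    then show ?thesis unfolding pnorm_def using le p by (intro powr_mono2) auto
  qed
  have I: "infnorm lam \<le> infnorm mu"
  proof -
    have "\<forall>x\<in>set lam. x \<le> Max (insert 0 (set mu))"
    proof
      fix x assume x: "x \<in> set lam"
      define a where "a = Max (set v)"
      have a: "a \<in> set v" using vne unfolding a_def by simp
      have apos: "a > 0" using a vpos by auto
      have "x * a \<in> set (partition_product lam v)" using x a by (auto simp: set_pp)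
      then obtain y where y: "y \<in> set (partition_product mu v)" "x * a \<le> y"
        using embeds_elem[OF e] by blast
      then obtain c b where cb: "c \<in> set mu" "b \<in> set v" "y = c * b" by (auto simp: set_pp)
      have "b \<le> a" using cb unfolding a_def by simp
      hence "x * a \<le> c * a" using y cb by (metis le_trans mult_le_mono2)
      hence "x \<le> c" using apos by simp
      also have "c \<le> Max (insert 0 (set mu))" using cb by simp
      finally show "x \<le> Max (insert 0 (set mu))" .
    qed
    then have "Max (insert 0 (set lam)) \<le> Max (insert 0 (set mu))" by simp
    then show ?thesis unfolding infnorm_def by simp
  qed
  show ?thesis using P I by blast
qed

end
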